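(* Let $P=\forall x_1,\dots,x_n\,\exists y_1(D_1),\dots,y_k(D_k)$ be a topologically sorted prefix for $X$ and $Y$, let $G_{\mathrm{syn}}$ be an admissible group w.r.t. $P$, and let $G\subseteq G_{\mathrm{syn}}$ be a finite subset such that for all $g\in G$ and all $i,j\in\{1,\dots,k\}$: (1) $g(x)\in\operatorname{BF}(D_i)$ for all $x\in D_i$; (2) $g(y_i)\in\operatorname{BF}(\{y_j\mid D_j=D_i\})$; (3) if $D_i$ and $D_j$ are incomparable (neither $D_i\subseteq D_j$ nor $D_j\subseteq D_i$) and $g(y_i)\neq y_i$, then $g(y_j)=y_j$ and $g(x)=x$ for all $x\in D_j\setminus D_i$. Then \[\psi=\bigwedge_{g\in G}\bigwedge_{i=1}^{k}\Big(\Big(\bigwedge_{x\in D_i}(x\leftrightarrow g(x))\wedge\bigwedge_{j<i}(y_j\leftrightarrow g(y_j))\Big)\rightarrow\big(y_i\rightarrow g(y_i)\big)\Big)\] is a conjunctive symmetry breaker for the associated group of $G_{\mathrm{syn}}$.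
   Context: $X=\{x_1,\dots,x_n\}$, $Y=\{y_1,\dots,y_k\}$ are finite disjoint sets of propositional variables; for $V\subseteq X\cup Y$, $\operatorname{BF}(V)$ is the set of propositional formulas over $V$ (built from $\top,\bot$, variables and connectives); $\mathcal A(V)$ is the set of assignments $\sigma:V\to\{\top,\bot\}$ and $[\phi]_\sigma$ the truth value. A prefix $P=\forall x_1,\dots,x_n\,\exists y_1(D_1),\dots,y_k(D_k)$ has dependency sets $D_j\subseteq X$; it is topologically sorted if $D_i\subsetneq D_j$ implies $i<j$. An interpretation is $s=(s_1,\dots,s_k)$ with $s_j:\{\top,\bot\}^{|D_j|}\to\{\top,\bot\}$; $\mathcal S(P)$ is the set of interpretations. For $\sigma\in\mathcal A(X)$, the induced assignment $\sigma_s\in\mathcal A(X\cup Y)$ equals $\sigma$ on $X$ and $\sigma_s(y_j)=s_j$ evaluated at the values of $\sigma$ on $D_j$ (variables in increasing index order). For a DQBF $P.\phi$ ($\phi\in\operatorname{BF}(X\cup Y)$), $[P.\phi]_s=\bigwedge_{\sigma\in\mathcal A(X)}[\phi]_{\sigma_s}$. For a function $g:\operatorname{BF}(V)\to\operatorname{BF}(V)$ and $\sigma\in\mathcal A(V)$, $g(\sigma)\in\mathcal A(V)$ is $g(\sigma)(v)=[g(v)]_\sigma$; $g$ preserves propositional satisfiability if $[g(\phi)]_\sigma=[\phi]_{g(\sigma)}$ for all $\sigma,\phi$. A formula in $\operatorname{BF}(Y)$ depends on $x_i$ if it contains some $y_j$ with $x_i\in D_j$. A bijection $g:\operatorname{BF}(X\cup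 Y)\to\operatorname{BF}(X\cup Y)$ is admissible w.r.t. $P$ if it preserves propositional satisfiability, $g(x_i)\in\operatorname{BF}(X)$ and $g(y_j)\in\operatorname{BF}(Y)$ for all $i,j$, and whenever $g(y_j)$ depends on $x_i$ then $g^{-1}(x_i)\in\operatorname{BF}(D_j)$. An admissible group is a subgroup (under composition) of the group of all admissible functions. For admissible $g$ and $\sigma\in\mathcal A(X)$, $g(\sigma)\in\mathcal A(X)$ is defined by $g(\sigma)(x)=[g(x)]_\sigma$. The associated group $G_{\mathrm{sem}}$ of an admissible group $G_{\mathrm{syn}}$ is the set of all bijections $f:\mathcal S(P)\to\mathcal S(P)$ such that for every $s\in\mathcal S(P)$ and every $\sigma\in\mathcal A(X)$ there exists $g\in G_{\mathrm{syn}}$ with $g(\sigma)_{f(s)}=g(\sigma_s)$. Given a group $G_{\mathrm{sem}}$ of bijections of $\mathcal S(P)$, a formula $\psi\in\operatorname{BF}(X\cup Y)$ is a conjunctive symmetry breaker for $G_{\mathrm{sem}}$ if for every $s\in\mathcal S(P)$ there is $g\in G_{\mathrm{sem}}$ with $[P.\psi]_{g(s)}=\top$. *)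

theory Defs
  imports Main
begin

text \<open>Universal variables x_i are XV i (i = 1..n), existential variables y_j are YV j (j = 1..k).\<close>
datatype var = XV nat | YV nat

datatype form = FTop | FBot | FVar var | FNot form | FAnd form form | FOr form form
  | FImp form form | FIff form form

fun vars :: "form \<Rightarrow> var set" where
  "vars FTop = {}"
| "vars FBot = {}"
| "vars (FVar v) = {v}"
| "vars (FNot a) = vars a"
| "vars (FAnd a b) = vars a \<union> vars b"
| "vars (FOr a b) = vars a \<union> vars b"
| "vars (FImp a b) = vars a \<union> vars b"
| "vars (FIff a b) = vars a \<union> vars b"

fun eval :: "(var \<Rightarrow> bool) \<Rightarrow> form \<Rightarrow> bool" where
  "eval \<sigma> FTop = True"
| "eval \<sigma> FBot = False"
| "eval \<sigma> (FVar v) = \<sigma> v"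
| "eval \<sigma> (FNot a) = (\<not> eval \<sigma> a)"
| "eval \<sigma> (FAnd a b) = (eval \<sigma> a \<and> eval \<sigma> b)"
| "eval \<sigma> (FOr a b) = (eval \<sigma> a \<or> eval \<sigma> b)"
| "eval \<sigma> (FImp a b) = (eval \<sigma> a \<longrightarrow> eval \<sigma> b)"
| "eval \<sigma> (FIff a b) = (eval \<sigma> a \<longleftrightarrow> eval \<sigma> b)"

definition Xs :: "nat \<Rightarrow> var set" where "Xs n = XV ` {1..n}"
definition Ys :: "nat \<Rightarrow> var set" where "Ys k = YV ` {1..k}"

definition BF :: "var set \<Rightarrow> form set" where "BF V = {\<phi>. vars \<phi> \<subseteq> V}"

text \<open>A(V): assignments V \<rightarrow> bool, represented canonically as total functions that are False outside V.\<close>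
definition Asg :: "var set \<Rightarrow> (var \<Rightarrow> bool) set" where
  "Asg V = {\<sigma>. \<forall>v. v \<notin> V \<longrightarrow> \<sigma> v = False}"

text \<open>Finite conjunction of a (finite) set of formulas; the order of conjuncts is irrelevant semantically.\<close>
definition Conj :: "form set \<Rightarrow> form" where
  "Conj F = foldr FAnd (SOME xs. set xs = F) FTop"

text \<open>A prefix is given by n, k and dependency sets D j \<subseteq> {1..n} (indices of universal variables), j = 1..k.\<close>
definition prefix :: "nat \<Rightarrow> nat \<Rightarrow> (nat \<Rightarrow> nat set) \<Rightarrow> bool" where
  "prefix n k D = (\<forall>j\<in>{1..k}. D j \<subseteq> {1..n})"

definition topsorted :: "nat \<Rightarrow> (nat \<Rightarrow> nat set) \<Rightarrow> bool" where
  "topsorted k D = (\<forall>i\<in>{1..k}. \<forall>j\<in>{1..k}. D i \<subset> D j \<longrightarrow> i < j)"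

definition Dv :: "(nat \<Rightarrow> nat set) \<Rightarrow> nat \<Rightarrow> var set" where "Dv D j = XV ` D j"

text \<open>Interpretations: s j : {T,F}^|D_j| \<rightarrow> {T,F}, as functions on bool lists of length |D_j|
  (value False on lists of other lengths, and s j = False for j outside 1..k).\<close>
definition Interp :: "nat \<Rightarrow> (nat \<Rightarrow> nat set) \<Rightarrow> (nat \<Rightarrow> bool list \<Rightarrow> bool) set" where
  "Interp k D = {s. (\<forall>j. j \<notin> {1..k} \<longrightarrow> s j = (\<lambda>_. False)) \<and>
       (\<forall>j\<in>{1..k}. \<forall>l. length l \<noteq> card (D j) \<longrightarrow> s j l = False)}"

definition induced :: "nat \<Rightarrow> nat \<Rightarrow> (nat \<Rightarrow> nat set) \<Rightarrow> (nat \<Rightarrow> bool list \<Rightarrow> bool)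
    \<Rightarrow> (var \<Rightarrow> bool) \<Rightarrow> (var \<Rightarrow> bool)" where
  "induced n k D s \<sigma> v = (case v of
      XV i \<Rightarrow> (if i \<in> {1..n} then \<sigma> (XV i) else False)
    | YV j \<Rightarrow> (if j \<in> {1..k} then s j (map (\<lambda>i. \<sigma> (XV i)) (sorted_list_of_set (D j))) else False))"

definition dqbf_val :: "nat \<Rightarrow> nat \<Rightarrow> (nat \<Rightarrow> nat set) \<Rightarrow> form \<Rightarrow> (nat \<Rightarrow> bool list \<Rightarrow> bool) \<Rightarrow> bool" where
  "dqbf_val n k D \<phi> s = (\<forall>\<sigma>\<in>Asg (Xs n). eval (induced n k D s \<sigma>) \<phi>)"

definition gasg :: "(form \<Rightarrow> form) \<Rightarrow> var set \<Rightarrow> (var \<Rightarrow> bool) \<Rightarrow> (var \<Rightarrow> bool)" where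
  "gasg g V \<sigma> v = (if v \<in> V then eval \<sigma> (g (FVar v)) else False)"

definition preserves_sat :: "var set \<Rightarrow> (form \<Rightarrow> form) \<Rightarrow> bool" where
  "preserves_sat V g = (\<forall>\<sigma>\<in>Asg V. \<forall>\<phi>\<in>BF V. eval \<sigma> (g \<phi>) = eval (gasg g V \<sigma>) \<phi>)"

definition depends_on :: "nat \<Rightarrow> (nat \<Rightarrow> nat set) \<Rightarrow> form \<Rightarrow> nat \<Rightarrow> bool" where
  "depends_on k D \<phi> i = (\<exists>j\<in>{1..k}. YV j \<in> vars \<phi> \<and> i \<in> D j)"

text \<open>Admissible bijections of BF(X \<union> Y); as total HOL functions they are canonically
  taken to be the identity outside BF(X \<union> Y), so that composition is group composition.\<close>
definition admissible :: "nat \<Rightarrow> nat \<Rightarrow> (nat \<Rightarrow> nat set) \<Rightarrow> (form \<Rightarrow> form) \<Rightarrow> bool" where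
  "admissible n k D g = (
     bij_betw g (BF (Xs n \<union> Ys k)) (BF (Xs n \<union> Ys k)) \<and>
     (\<forall>\<phi>. \<phi> \<notin> BF (Xs n \<union> Ys k) \<longrightarrow> g \<phi> = \<phi>) \<and>
     preserves_sat (Xs n \<union> Ys k) g \<and>
     (\<forall>i\<in>{1..n}. g (FVar (XV i)) \<in> BF (Xs n)) \<and>
     (\<forall>j\<in>{1..k}. g (FVar (YV j)) \<in> BF (Ys k)) \<and>
     (\<forall>j\<in>{1..k}. \<forall>i\<in>{1..n}. depends_on k D (g (FVar (YV j))) i \<longrightarrow>
         the_inv_into (BF (Xs n \<union> Ys k)) g (FVar (XV i)) \<in> BF (Dv D j)))"

definition admissible_group :: "nat \<Rightarrow> nat \<Rightarrow> (nat \<Rightarrow> nat set) \<Rightarrow> (form \<Rightarrow> form) set \<Rightarrow> bool" where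
  "admissible_group n k D Gs = (
     (\<forall>g\<in>Gs. admissible n k D g) \<and> id \<in> Gs \<and>
     (\<forall>g\<in>Gs. \<forall>h\<in>Gs. g \<circ> h \<in> Gs) \<and>
     (\<forall>g\<in>Gs. \<exists>h\<in>Gs. g \<circ> h = id \<and> h \<circ> g = id))"

text \<open>The associated group G_sem of G_syn (bijections of S(P); canonically identity outside S(P)).\<close>
definition assoc_group :: "nat \<Rightarrow> nat \<Rightarrow> (nat \<Rightarrow> nat set) \<Rightarrow> (form \<Rightarrow> form) set
    \<Rightarrow> ((nat \<Rightarrow> bool list \<Rightarrow> bool) \<Rightarrow> (nat \<Rightarrow> bool list \<Rightarrow> bool)) set" where
  "assoc_group n k D Gs = {f. bij_betw f (Interp k D) (Interp k D) \<and>
      (\<forall>s. s \<notin> Interp k D \<longrightarrow> f s = s) \<and>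
      (\<forall>s\<in>Interp k D. \<forall>\<sigma>\<in>Asg (Xs n). \<exists>g\<in>Gs.
          induced n k D (f s) (gasg g (Xs n) \<sigma>) = gasg g (Xs n \<union> Ys k) (induced n k D s \<sigma>))}"

definition conj_symmetry_breaker :: "nat \<Rightarrow> nat \<Rightarrow> (nat \<Rightarrow> nat set)
    \<Rightarrow> ((nat \<Rightarrow> bool list \<Rightarrow> bool) \<Rightarrow> (nat \<Rightarrow> bool list \<Rightarrow> bool)) set \<Rightarrow> form \<Rightarrow> bool" where
  "conj_symmetry_breaker n k D Gsem \<psi> =
     (\<forall>s\<in>Interp k D. \<exists>f\<in>Gsem. dqbf_val n k D \<psi> (f s))"

definition sb_clause :: "(nat \<Rightarrow> nat set) \<Rightarrow> (form \<Rightarrow> form) \<Rightarrow> nat \<Rightarrow> form" where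
  "sb_clause D g i =
     FImp (FAnd (Conj {FIff (FVar (XV x)) (g (FVar (XV x))) | x. x \<in> D i})
                (Conj {FIff (FVar (YV j)) (g (FVar (YV j))) | j. j \<in> {1..<i}}))
          (FImp (FVar (YV i)) (g (FVar (YV i))))"

definition sb_formula :: "nat \<Rightarrow> (nat \<Rightarrow> nat set) \<Rightarrow> (form \<Rightarrow> form) set \<Rightarrow> form" where
  "sb_formula k D G = Conj {sb_clause D g i | g i. g \<in> G \<and> i \<in> {1..k}}"

end

theory Submission
  imports Defs
begin


lemma eval_cong: "(\<And>v. v \<in> vars \<phi> \<Longrightarrow> \<tau> v = \<tau>' v) \<Longrightarrow> eval \<tau> \<phi> = eval \<tau>' \<phi>"
  by (induction \<phi>) auto

lemma FVar_BF[simp]: "FVar v \<in> BF W \<longleftrightarrow> v \<in> W" by (simp add: BF_def)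
lemma XV_Xs[simp]: "XV x \<in> Xs n \<longleftrightarrow> x \<in> {1..n}" by (auto simp: Xs_def)
lemma YV_Xs[simp]: "YV x \<notin> Xs n" by (auto simp: Xs_def)
lemma XV_Ys[simp]: "XV x \<notin> Ys k" by (auto simp: Ys_def)
lemma YV_Ys[simp]: "YV x \<in> Ys k \<longleftrightarrow> x \<in> {1..k}" by (auto simp: Ys_def)

lemma eval_foldr: "eval \<tau> (foldr FAnd xs FTop) = (\<forall>\<phi>\<in>set xs. eval \<tau> \<phi>)"
  by (induction xs) auto

lemma eval_Conj: "finite F \<Longrightarrow> eval \<tau> (Conj F) = (\<forall>\<phi>\<in>F. eval \<tau> \<phi>)"
proof -
  assume "finite F"
  then have "\<exists>xs. set xs = F" by (rule finite_list)
  then have "set (SOME xs. set xs = F) = F" by (rule someI_ex)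
  then show ?thesis by (simp add: Conj_def eval_foldr)
qed

definition proj :: "(nat \<Rightarrow> nat set) \<Rightarrow> nat \<Rightarrow> (var \<Rightarrow> bool) \<Rightarrow> bool list" where
  "proj D j \<rho> = map (\<lambda>x. \<rho> (XV x)) (sorted_list_of_set (D j))"

definition asg_of :: "(nat \<Rightarrow> nat set) \<Rightarrow> nat \<Rightarrow> bool list \<Rightarrow> var \<Rightarrow> bool" where
  "asg_of D j l v = (case v of XV x \<Rightarrow> (\<exists>p<length l. sorted_list_of_set (D j) ! p = x \<and> l ! p) | YV _ \<Rightarrow> False)"

definition lift :: "(nat \<Rightarrow> nat set) \<Rightarrow> nat \<Rightarrow> ((var \<Rightarrow> bool) \<Rightarrow> bool) \<Rightarrow> bool list \<Rightarrow> bool" where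
  "lift D j F l = (if length l = card (D j) then F (asg_of D j l) else False)"

lemma proj_asg: assumes "finite (D j)" "length l = card (D j)"
  shows "proj D j (asg_of D j l) = l"
proof (rule nth_equalityI)
  show "length (proj D j (asg_of D j l)) = length l" using assms by (simp add: proj_def)
  fix p assume p: "p < length (proj D j (asg_of D j l))"
  let ?s = "sorted_list_of_set (D j)"
  have ps: "p < length ?s" "p < length l" using p assms by (auto simp: proj_def)
  have d: "distinct ?s" by simp
  have "asg_of D j l (XV (?s ! p)) = l ! p"
    unfolding asg_of_def using ps d assms by (auto simp: nth_eq_iff_index_eq)
  then show "proj D j (asg_of D j l) ! p = l ! p" using ps by (simp add: proj_def)
qed

lemma asg_proj: assumes "finite (D j)" "x \<in> D j"
  shows "asg_of D j (proj D j \<rho>) (XV x) = \<rho> (XV x)"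
proof -
  let ?s = "sorted_list_of_set (D j)"
  have "x \<in> set ?s" using assms by simp
  then obtain p where p: "p < length ?s" "?s ! p = x" by (auto simp: in_set_conv_nth)
  have d: "distinct ?s" by simp
  show ?thesis unfolding asg_of_def proj_def using p d
    by (auto simp: nth_eq_iff_index_eq)
qed

lemma asg_of_Asg: assumes "D j \<subseteq> {1..n}" "length l = card (D j)" shows "asg_of D j l \<in> Asg (Xs n)"
  unfolding Asg_def
proof (intro CollectI allI impI)
  fix v assume v: "v \<notin> Xs n"
  have f: "finite (D j)" using assms(1) finite_subset by blast
  show "asg_of D j l v = False"
  proof (cases v)
    case (XV x)
    have x: "x \<notin> D j" using v XV assms(1) by auto
    have "sorted_list_of_set (D j) ! p \<in> D j" if "p < length l" for p
    proof -
      have "p < length (sorted_list_of_set (D j))" using that assms(2) by simp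
      then have "sorted_list_of_set (D j) ! p \<in> set (sorted_list_of_set (D j))" by (rule nth_mem)
      then show ?thesis using f by simp
    qed
    then show ?thesis using XV x unfolding asg_of_def by auto
  next
    case (YV y) then show ?thesis by (simp add: asg_of_def)
  qed
qed

lemma proj_cong: "finite (D j) \<Longrightarrow> (\<And>x. x \<in> D j \<Longrightarrow> \<rho> (XV x) = \<rho>' (XV x)) \<Longrightarrow> proj D j \<rho> = proj D j \<rho>'"
  by (simp add: proj_def)

lemma lift_proj:
  assumes "D j \<subseteq> {1..n}" "\<rho> \<in> Asg (Xs n)"
    and resp: "\<And>\<rho>1 \<rho>2. \<rho>1 \<in> Asg (Xs n) \<Longrightarrow> \<rho>2 \<in> Asg (Xs n) \<Longrightarrow> (\<And>x. x \<in> D j \<Longrightarrow> \<rho>1 (XV x) = \<rho>2 (XV x)) \<Longrightarrow> F \<rho>1 = F \<rho>2"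
  shows "lift D j F (proj D j \<rho>) = F \<rho>"
proof -
  have f: "finite (D j)" using assms finite_subset by blast
  have "length (proj D j \<rho>) = card (D j)" using f by (simp add: proj_def)
  then have "lift D j F (proj D j \<rho>) = F (asg_of D j (proj D j \<rho>))" by (simp add: lift_def)
  also have "\<dots> = F \<rho>" using resp[OF asg_of_Asg[of D j n, OF assms(1) \<open>length (proj D j \<rho>) = card (D j)\<close>] assms(2)] asg_proj[of D j, OF f] by blast
  finally show ?thesis .
qed

lemma induced_XV: "induced n k D s \<sigma> (XV x) = (if x \<in> {1..n} then \<sigma> (XV x) else False)"
  by (simp add: induced_def)
lemma induced_YV: "induced n k D s \<sigma> (YV j) = (if j \<in> {1..k} then s j (proj D j \<sigma>) else False)"
  by (simp add: induced_def proj_def)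

lemma induced_Asg: "induced n k D s \<sigma> \<in> Asg (Xs n \<union> Ys k)"
  by (auto simp: Asg_def induced_def split: var.splits)
lemma gasg_Asg: "gasg g W \<sigma> \<in> Asg W"
  by (auto simp: Asg_def gasg_def)
lemma gasg_id: "\<tau> \<in> Asg W \<Longrightarrow> gasg id W \<tau> = \<tau>"
  by (auto simp: Asg_def gasg_def fun_eq_iff)
lemma Asg_mono: "\<tau> \<in> Asg W \<Longrightarrow> W \<subseteq> W' \<Longrightarrow> \<tau> \<in> Asg W'"
  by (auto simp: Asg_def)
lemma Asg_XV: "\<sigma> \<in> Asg (Xs n) \<Longrightarrow> x \<notin> {1..n} \<Longrightarrow> \<sigma> (XV x) = False"
  by (auto simp: Asg_def)
lemma Asg_YV: "\<sigma> \<in> Asg (Xs n) \<Longrightarrow> \<sigma> (YV x) = False"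
  by (auto simp: Asg_def)

lemma eval_induced_X: "\<rho> \<in> Asg (Xs n) \<Longrightarrow> \<phi> \<in> BF (Xs n) \<Longrightarrow> eval (induced n k D s \<rho>) \<phi> = eval \<rho> \<phi>"
  by (rule eval_cong) (auto simp: BF_def Xs_def induced_def)

locale setting =
  fixes n k :: nat and D :: "nat \<Rightarrow> nat set" and Gsyn :: "(form \<Rightarrow> form) set"
  assumes pre: "prefix n k D" and tops: "topsorted k D" and grp: "admissible_group n k D Gsyn"
begin

definition RR where "RR s t = (\<forall>\<sigma>\<in>Asg (Xs n). \<exists>g\<in>Gsyn.
   induced n k D t (gasg g (Xs n) \<sigma>) = gasg g (Xs n \<union> Ys k) (induced n k D s \<sigma>))"

lemma adm: assumes "g \<in> Gsyn" shows "admissible n k D g"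
proof -
  have "\<forall>g\<in>Gsyn. admissible n k D g" using grp unfolding admissible_group_def by (elim conjE) assumption
  then show ?thesis using assms by blast
qed

lemma Dsub: "j \<in> {1..k} \<Longrightarrow> D j \<subseteq> {1..n}"
  using pre unfolding prefix_def by (rule bspec)
lemma Dfin: "j \<in> {1..k} \<Longrightarrow> finite (D j)"
  using Dsub finite_subset by blast

lemma adm_bij: assumes "g \<in> Gsyn" shows "bij_betw g (BF (Xs n \<union> Ys k)) (BF (Xs n \<union> Ys k))"
  using adm[OF assms] unfolding admissible_def by (elim conjE) assumption
lemma adm_ps0: assumes "g \<in> Gsyn" shows "preserves_sat (Xs n \<union> Ys k) g"
  using adm[OF assms] unfolding admissible_def by (elim conjE) assumption
lemma adm_X0: assumes "g \<in> Gsyn" shows "\<forall>i\<in>{1..n}. g (FVar (XV i)) \<in> BF (Xs n)"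
  using adm[OF assms] unfolding admissible_def by (elim conjE) assumption
lemma adm_dep: assumes "g \<in> Gsyn" shows "\<forall>j\<in>{1..k}. \<forall>i\<in>{1..n}. depends_on k D (g (FVar (YV j))) i \<longrightarrow>
         the_inv_into (BF (Xs n \<union> Ys k)) g (FVar (XV i)) \<in> BF (Dv D j)"
  using adm[OF assms] unfolding admissible_def by (elim conjE) assumption

lemma adm_BF: "g \<in> Gsyn \<Longrightarrow> \<phi> \<in> BF (Xs n \<union> Ys k) \<Longrightarrow> g \<phi> \<in> BF (Xs n \<union> Ys k)"
  using adm_bij bij_betwE by blast

lemma adm_X: "g \<in> Gsyn \<Longrightarrow> x \<in> {1..n} \<Longrightarrow> g (FVar (XV x)) \<in> BF (Xs n)"
  using adm_X0 by blast

lemma adm_ps: "g \<in> Gsyn \<Longrightarrow> \<tau> \<in> Asg (Xs n \<union> Ys k) \<Longrightarrow> \<phi> \<in> BF (Xs n \<union> Ys k) \<Longrightarrow>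
   eval \<tau> (g \<phi>) = eval (gasg g (Xs n \<union> Ys k) \<tau>) \<phi>"
  using adm_ps0 unfolding preserves_sat_def by blast

lemma comp: assumes "a \<in> Gsyn" "b \<in> Gsyn" "\<tau> \<in> Asg (Xs n \<union> Ys k)"
  shows "gasg a (Xs n \<union> Ys k) (gasg b (Xs n \<union> Ys k) \<tau>) = gasg (b \<circ> a) (Xs n \<union> Ys k) \<tau>"
proof
  fix v show "gasg a (Xs n \<union> Ys k) (gasg b (Xs n \<union> Ys k) \<tau>) v = gasg (b \<circ> a) (Xs n \<union> Ys k) \<tau> v"
  proof (cases "v \<in> Xs n \<union> Ys k")
    case True
    then have "a (FVar v) \<in> BF (Xs n \<union> Ys k)" using adm_BF[OF assms(1)] by simp
    then show ?thesis using True adm_ps[OF assms(2,3)] by (simp add: gasg_def)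
  qed (simp add: gasg_def)
qed

lemma gasgX_eq: "v \<in> Xs n \<Longrightarrow> gasg b (Xs n) \<rho> v = gasg b (Xs n \<union> Ys k) \<rho> v"
  by (simp add: gasg_def)

lemma compX: assumes "a \<in> Gsyn" "b \<in> Gsyn" "\<rho> \<in> Asg (Xs n)"
  shows "gasg a (Xs n) (gasg b (Xs n) \<rho>) = gasg (b \<circ> a) (Xs n) \<rho>"
proof
  fix v show "gasg a (Xs n) (gasg b (Xs n) \<rho>) v = gasg (b \<circ> a) (Xs n) \<rho> v"
  proof (cases "v \<in> Xs n")
    case True
    then obtain x where x: "v = XV x" "x \<in> {1..n}" by (auto simp: Xs_def)
    have ax: "a (FVar v) \<in> BF (Xs n)" using adm_X[OF assms(1) x(2)] x by simp
    have "eval (gasg b (Xs n) \<rho>) (a (FVar v)) = eval (gasg b (Xs n \<union> Ys k) \<rho>) (a (FVar v))"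
      by (rule eval_cong) (use ax gasgX_eq in \<open>auto simp: BF_def\<close>)
    also have "\<dots> = eval \<rho> (b (a (FVar v)))"
      using adm_ps[OF assms(2) Asg_mono[OF assms(3)], of "a (FVar v)"] ax by (auto simp: BF_def)
    finally show ?thesis using True by (simp add: gasg_def)
  qed (simp add: gasg_def)
qed

lemma XV_part: assumes "a \<in> Gsyn" "\<rho> \<in> Asg (Xs n)"
  shows "induced n k D t (gasg a (Xs n) \<rho>) (XV x) = gasg a (Xs n \<union> Ys k) (induced n k D s \<rho>) (XV x)"
proof (cases "x \<in> {1..n}")
  case True
  have "eval (induced n k D s \<rho>) (a (FVar (XV x))) = eval \<rho> (a (FVar (XV x)))"
    using eval_induced_X[OF assms(2) adm_X[OF assms(1) True]] .
  then show ?thesis using True by (simp add: induced_XV gasg_def)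
next
  case False then show ?thesis by (auto simp add: induced_XV gasg_def)
qed

lemma id_in: "id \<in> Gsyn" using grp unfolding admissible_group_def by (elim conjE) assumption
lemma comp_in: "a \<in> Gsyn \<Longrightarrow> b \<in> Gsyn \<Longrightarrow> a \<circ> b \<in> Gsyn" using grp unfolding admissible_group_def by (elim conjE) blast
lemma inv_ex: "g \<in> Gsyn \<Longrightarrow> \<exists>h\<in>Gsyn. g \<circ> h = id \<and> h \<circ> g = id" using grp unfolding admissible_group_def by blast

lemma RR_refl: "RR s s"
  unfolding RR_def
proof
  fix \<sigma> :: "var \<Rightarrow> bool" assume "\<sigma> \<in> Asg (Xs n)"
  then show "\<exists>g\<in>Gsyn. induced n k D s (gasg g (Xs n) \<sigma>) = gasg g (Xs n \<union> Ys k) (induced n k D s \<sigma>)"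
    using id_in gasg_id[OF induced_Asg] by (intro bexI[of _ id]) (auto simp: gasg_id)
qed

lemma RR_trans: assumes "RR a b" "RR b c" shows "RR a c"
  unfolding RR_def
proof
  fix \<rho> :: "var \<Rightarrow> bool" assume r: "\<rho> \<in> Asg (Xs n)"
  obtain h1 where h1: "h1 \<in> Gsyn" "induced n k D b (gasg h1 (Xs n) \<rho>) = gasg h1 (Xs n \<union> Ys k) (induced n k D a \<rho>)"
    using assms(1) r unfolding RR_def by blast
  obtain h2 where h2: "h2 \<in> Gsyn" "induced n k D c (gasg h2 (Xs n) (gasg h1 (Xs n) \<rho>)) = gasg h2 (Xs n \<union> Ys k) (induced n k D b (gasg h1 (Xs n) \<rho>))"
    using assms(2) gasg_Asg unfolding RR_def by blast
  have "induced n k D c (gasg (h1 \<circ> h2) (Xs n) \<rho>) = gasg (h1 \<circ> h2) (Xs n \<union> Ys k) (induced n k D a \<rho>)"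
    using h1 h2 compX[OF h2(1) h1(1) r] comp[OF h2(1) h1(1) induced_Asg] by simp
  then show "\<exists>g\<in>Gsyn. induced n k D c (gasg g (Xs n) \<rho>) = gasg g (Xs n \<union> Ys k) (induced n k D a \<rho>)"
    using comp_in[OF h1(1) h2(1)] by blast
qed

end



context setting begin
definition K :: "(nat \<Rightarrow> bool list \<Rightarrow> bool) \<Rightarrow> nat list" where
  "K s = map (\<lambda>j. card {l. length l = card (D j) \<and> s j l}) [1..<Suc k]"
end

locale violation = setting +
  fixes t :: "nat \<Rightarrow> bool list \<Rightarrow> bool" and \<sigma> :: "var \<Rightarrow> bool" and g h :: "form \<Rightarrow> form" and i :: nat
  assumes tI: "t \<in> Interp k D" and sA: "\<sigma> \<in> Asg (Xs n)" and gG: "g \<in> Gsyn" and hG: "h \<in> Gsyn"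
    and gh: "g \<circ> h = id" and hg: "h \<circ> g = id" and iK: "i \<in> {1..k}"
    and c1: "\<forall>x\<in>D i. g (FVar (XV x)) \<in> BF (Dv D i)"
    and c2: "\<forall>j\<in>{1..k}. g (FVar (YV j)) \<in> BF (YV ` {l\<in>{1..k}. D l = D j})"
    and c3: "\<forall>j\<in>{1..k}. \<not> (D i \<subseteq> D j) \<and> \<not> (D j \<subseteq> D i) \<and> g (FVar (YV i)) \<noteq> FVar (YV i) \<longrightarrow>
                 g (FVar (YV j)) = FVar (YV j) \<and> (\<forall>x\<in>D j - D i. g (FVar (XV x)) = FVar (XV x))"
    and vx: "\<forall>x\<in>D i. induced n k D t \<sigma> (XV x) = eval (induced n k D t \<sigma>) (g (FVar (XV x)))"
    and vy: "\<forall>j\<in>{1..<i}. induced n k D t \<sigma> (YV j) = eval (induced n k D t \<sigma>) (g (FVar (YV j)))"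
    and vi: "induced n k D t \<sigma> (YV i)" and vgi: "\<not> eval (induced n k D t \<sigma>) (g (FVar (YV i)))"
begin

definition agr where "agr \<rho> = (\<forall>x\<in>D i. \<rho> (XV x) = \<sigma> (XV x))"

definition Fj where "Fj j \<rho> = (if D i \<subseteq> D j \<and> agr \<rho>
   then eval (induced n k D t (gasg h (Xs n) \<rho>)) (g (FVar (YV j))) else t j (proj D j \<rho>))"

definition t2 where "t2 j l = (if j \<in> {1..k} then lift D j (Fj j) l else False)"

lemma Di_n: "x \<in> D i \<Longrightarrow> x \<in> {1..n}" using Dsub[OF iK] by blast

lemma sig_fix: assumes "x \<in> D i" shows "eval \<sigma> (g (FVar (XV x))) = \<sigma> (XV x)"
proof -
  have x: "x \<in> {1..n}" using Di_n[OF assms] .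
  have "eval (induced n k D t \<sigma>) (g (FVar (XV x))) = eval \<sigma> (g (FVar (XV x)))"
    using eval_induced_X[OF sA adm_X[OF gG x]] .
  moreover have "induced n k D t \<sigma> (XV x) = \<sigma> (XV x)" using x by (simp add: induced_XV)
  moreover have "induced n k D t \<sigma> (XV x) = eval (induced n k D t \<sigma>) (g (FVar (XV x)))" using vx assms by blast
  ultimately show ?thesis by simp
qed

lemma c2v: assumes "j \<in> {1..k}" "v \<in> vars (g (FVar (YV j)))"
  shows "\<exists>l. v = YV l \<and> l \<in> {1..k} \<and> D l = D j"
proof -
  have "v \<in> YV ` {l'\<in>{1..k}. D l' = D j}" using c2 assms unfolding BF_def by blast
  then show ?thesis by blast
qed

lemma gD_vars: "x \<in> D i \<Longrightarrow> v \<in> vars (g (FVar (XV x))) \<Longrightarrow> \<exists>y\<in>D i. v = XV y"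
  using c1 by (auto simp: BF_def Dv_def)

lemma agr_g: assumes "agr \<rho>" shows "agr (gasg g (Xs n) \<rho>)"
  unfolding agr_def
proof
  fix x assume x: "x \<in> D i"
  have "eval \<rho> (g (FVar (XV x))) = eval \<sigma> (g (FVar (XV x)))"
    by (rule eval_cong) (use gD_vars[OF x] assms in \<open>auto simp: agr_def\<close>)
  then show "gasg g (Xs n) \<rho> (XV x) = \<sigma> (XV x)"
    using sig_fix[OF x] Di_n[OF x] by (simp add: gasg_def)
qed

lemma hdep: assumes j: "j \<in> {1..k}" and l: "YV l \<in> vars (g (FVar (YV j)))" and x: "x \<in> D l"
  shows "h (FVar (XV x)) \<in> BF (Dv D j)"
proof -
  have lk: "l \<in> {1..k}" and Dl: "D l = D j" using c2v[OF j l] by auto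
  have xn: "x \<in> {1..n}" using Dsub[OF lk] x by blast
  have "depends_on k D (g (FVar (YV j))) x" unfolding depends_on_def using lk l x by blast
  then have ti: "the_inv_into (BF (Xs n \<union> Ys k)) g (FVar (XV x)) \<in> BF (Dv D j)"
    using adm_dep[OF gG] j xn by blast
  have inj: "inj_on g (BF (Xs n \<union> Ys k))" using adm_bij[OF gG] unfolding bij_betw_def by (elim conjE)
  have hx: "h (FVar (XV x)) \<in> BF (Xs n \<union> Ys k)" using adm_BF[OF hG] xn by simp
  have "g (h (FVar (XV x))) = FVar (XV x)" using gh by (metis comp_apply id_apply)
  then have "the_inv_into (BF (Xs n \<union> Ys k)) g (FVar (XV x)) = h (FVar (XV x))"
    using the_inv_into_f_eq[OF inj _ hx] by blast
  then show ?thesis using ti by simp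
qed

lemma gyi_var: "\<exists>l. YV l \<in> vars (g (FVar (YV i)))"
proof (rule ccontr)
  assume no: "\<not> ?thesis"
  have "vars (g (FVar (YV i))) \<subseteq> YV ` {l\<in>{1..k}. D l = D i}" using c2 iK by (auto simp: BF_def)
  with no have e: "vars (g (FVar (YV i))) = {}" by blast
  have key: "\<tau> (YV i) = eval (gasg h (Xs n \<union> Ys k) \<tau>) (g (FVar (YV i)))" if "\<tau> \<in> Asg (Xs n \<union> Ys k)" for \<tau>
  proof -
    have "gasg g (Xs n \<union> Ys k) (gasg h (Xs n \<union> Ys k) \<tau>) = \<tau>"
      using comp[OF gG hG that] hg gasg_id[OF that] by simp
    then have "gasg g (Xs n \<union> Ys k) (gasg h (Xs n \<union> Ys k) \<tau>) (YV i) = \<tau> (YV i)" by simp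
    then show ?thesis using iK by (simp add: gasg_def)
  qed
  have a1: "(\<lambda>v. v = YV i) \<in> Asg (Xs n \<union> Ys k)" using iK by (auto simp: Asg_def)
  have a2: "(\<lambda>v. False) \<in> Asg (Xs n \<union> Ys k)" by (auto simp: Asg_def)
  have "eval (gasg h (Xs n \<union> Ys k) (\<lambda>v. v = YV i)) (g (FVar (YV i))) = eval (gasg h (Xs n \<union> Ys k) (\<lambda>v. False)) (g (FVar (YV i)))"
    by (rule eval_cong) (simp add: e)
  then show False using key[OF a1] key[OF a2] by simp
qed

lemma h_Di: assumes "x \<in> D i" shows "h (FVar (XV x)) \<in> BF (Dv D i)"
proof -
  obtain l where l: "YV l \<in> vars (g (FVar (YV i)))" using gyi_var by blast
  have "D l = D i" using c2v[OF iK l] by auto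
  then show ?thesis using hdep[OF iK l] assms by simp
qed

lemma hD_vars: "x \<in> D i \<Longrightarrow> v \<in> vars (h (FVar (XV x))) \<Longrightarrow> \<exists>y\<in>D i. v = XV y"
  using h_Di by (auto simp: BF_def Dv_def)

lemma hg_X: "\<rho> \<in> Asg (Xs n) \<Longrightarrow> gasg h (Xs n) (gasg g (Xs n) \<rho>) = \<rho>"
  using compX[OF hG gG] gh gasg_id by simp
lemma gh_X: "\<rho> \<in> Asg (Xs n) \<Longrightarrow> gasg g (Xs n) (gasg h (Xs n) \<rho>) = \<rho>"
  using compX[OF gG hG] hg gasg_id by simp

lemma agr_sig: "agr \<sigma>" by (simp add: agr_def)

lemma agr_h: assumes r: "agr \<rho>" shows "agr (gasg h (Xs n) \<rho>)"
  unfolding agr_def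
proof
  fix x assume x: "x \<in> D i"
  have "eval \<rho> (h (FVar (XV x))) = eval \<sigma> (h (FVar (XV x)))"
    by (rule eval_cong) (use hD_vars[OF x] r in \<open>auto simp: agr_def\<close>)
  also have "\<dots> = eval (gasg g (Xs n) \<sigma>) (h (FVar (XV x)))"
    by (rule eval_cong) (use hD_vars[OF x] agr_g[OF agr_sig] in \<open>auto simp: agr_def\<close>)
  also have "\<dots> = gasg h (Xs n) (gasg g (Xs n) \<sigma>) (XV x)" using Di_n[OF x] by (simp add: gasg_def)
  also have "\<dots> = \<sigma> (XV x)" using hg_X[OF sA] by simp
  finally show "gasg h (Xs n) \<rho> (XV x) = \<sigma> (XV x)" using Di_n[OF x] by (simp add: gasg_def)
qed

lemma ind_agr: assumes "agr \<rho>" "l \<in> {1..k}" "D l \<subseteq> D i"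
  shows "induced n k D s \<rho> (YV l) = induced n k D s \<sigma> (YV l)"
proof -
  have "proj D l \<rho> = proj D l \<sigma>"
    by (rule proj_cong[of D l, OF Dfin[OF assms(2)]]) (use assms in \<open>auto simp: agr_def\<close>)
  then show ?thesis by (simp add: induced_YV)
qed

lemma eval_gy: assumes "agr \<rho>" "j \<in> {1..k}" "D j \<subseteq> D i"
  shows "eval (induced n k D s \<rho>) (g (FVar (YV j))) = eval (induced n k D s \<sigma>) (g (FVar (YV j)))"
proof (rule eval_cong)
  fix v assume v: "v \<in> vars (g (FVar (YV j)))"
  then obtain l where l: "v = YV l" "l \<in> {1..k}" "D l = D j" using c2v assms(2) by blast
  then show "induced n k D s \<rho> v = induced n k D s \<sigma> v" using ind_agr[OF assms(1) l(2)] assms(3) by simp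
qed

lemma Fresp: assumes j: "j \<in> {1..k}" and ag: "\<And>x. x \<in> D j \<Longrightarrow> \<rho>1 (XV x) = \<rho>2 (XV x)"
  shows "Fj j \<rho>1 = Fj j \<rho>2"
proof -
  have pj: "proj D j \<rho>1 = proj D j \<rho>2" by (rule proj_cong[of D j, OF Dfin[OF j]]) (use ag in auto)
  show ?thesis
proof (cases "D i \<subseteq> D j")
  case True
  then have a: "agr \<rho>1 = agr \<rho>2" using ag by (auto simp: agr_def)
  have "eval (induced n k D t (gasg h (Xs n) \<rho>1)) (g (FVar (YV j))) = eval (induced n k D t (gasg h (Xs n) \<rho>2)) (g (FVar (YV j)))"
  proof (rule eval_cong)
    fix v assume v: "v \<in> vars (g (FVar (YV j)))"
    then obtain l where l: "v = YV l" "l \<in> {1..k}" "D l = D j" using c2v j by blast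
    have "proj D l (gasg h (Xs n) \<rho>1) = proj D l (gasg h (Xs n) \<rho>2)"
    proof (rule proj_cong[of D l, OF Dfin[OF l(2)]])
      fix x assume x: "x \<in> D l"
      have hx: "h (FVar (XV x)) \<in> BF (Dv D j)" using hdep[OF j _ x] v l by simp
      have "eval \<rho>1 (h (FVar (XV x))) = eval \<rho>2 (h (FVar (XV x)))"
        by (rule eval_cong) (use hx ag in \<open>auto simp: BF_def Dv_def\<close>)
      then show "gasg h (Xs n) \<rho>1 (XV x) = gasg h (Xs n) \<rho>2 (XV x)" by (simp add: gasg_def)
    qed
    then show "induced n k D t (gasg h (Xs n) \<rho>1) v = induced n k D t (gasg h (Xs n) \<rho>2) v"
      using l by (simp add: induced_YV)
  qed
  then show ?thesis using a pj by (simp add: Fj_def)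
next
  case False
  then show ?thesis using pj by (simp add: Fj_def)
qed
qed

lemma ind_t2: assumes "\<rho> \<in> Asg (Xs n)" "j \<in> {1..k}"
  shows "induced n k D t2 \<rho> (YV j) = Fj j \<rho>"
proof -
  have "lift D j (Fj j) (proj D j \<rho>) = Fj j \<rho>"
    by (rule lift_proj[of D j n, OF Dsub[OF assms(2)] assms(1)]) (rule Fresp[OF assms(2)])
  then show ?thesis using assms(2) by (simp add: induced_YV t2_def)
qed

lemma t2I: "t2 \<in> Interp k D"
  unfolding Interp_def by (auto simp: t2_def lift_def fun_eq_iff)

lemma gyi_ne: "g (FVar (YV i)) \<noteq> FVar (YV i)"
proof
  assume "g (FVar (YV i)) = FVar (YV i)"
  then have "eval (induced n k D t \<sigma>) (g (FVar (YV i))) = induced n k D t \<sigma> (YV i)" by simp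
  then show False using vi vgi by simp
qed

lemma j_lt_i: assumes "j \<in> {1..k}" "D j \<subset> D i" shows "j \<in> {1..<i}"
proof -
  have "j < i" using tops iK assms unfolding topsorted_def by blast
  then show ?thesis using assms(1) by simp
qed

lemma main_g: assumes r: "\<rho> \<in> Asg (Xs n)" and a: "agr \<rho>"
  shows "induced n k D t2 (gasg g (Xs n) \<rho>) = gasg g (Xs n \<union> Ys k) (induced n k D t \<rho>)"
proof
  fix v show "induced n k D t2 (gasg g (Xs n) \<rho>) v = gasg g (Xs n \<union> Ys k) (induced n k D t \<rho>) v"
  proof (cases v)
    case (XV x) then show ?thesis using XV_part[OF gG r] by simp
  next
    case (YV j)
    show ?thesis
    proof (cases "j \<in> {1..k}")
      case False then show ?thesis using YV by (auto simp add: induced_YV gasg_def)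
    next
      case j: True
      have gr: "gasg g (Xs n) \<rho> \<in> Asg (Xs n)" by (rule gasg_Asg)
      have ag: "agr (gasg g (Xs n) \<rho>)" using agr_g[OF a] .
      have L: "induced n k D t2 (gasg g (Xs n) \<rho>) v = Fj j (gasg g (Xs n) \<rho>)"
        using ind_t2[OF gr j] YV by simp
      have R: "gasg g (Xs n \<union> Ys k) (induced n k D t \<rho>) v = eval (induced n k D t \<rho>) (g (FVar (YV j)))"
        using YV j by (simp add: gasg_def)
      show ?thesis
      proof (cases "D i \<subseteq> D j")
        case True
        then have "Fj j (gasg g (Xs n) \<rho>) = eval (induced n k D t \<rho>) (g (FVar (YV j)))"
          using ag hg_X[OF r] by (simp add: Fj_def)
        then show ?thesis using L R by simp
      next
        case nij: False
        show ?thesis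
        proof (cases "D j \<subseteq> D i")
          case True
          have "Fj j (gasg g (Xs n) \<rho>) = t j (proj D j (gasg g (Xs n) \<rho>))" using nij by (simp add: Fj_def)
          also have "\<dots> = t j (proj D j \<sigma>)"
            by (rule arg_cong[where f="t j"], rule proj_cong[of D j, OF Dfin[OF j]]) (use ag True in \<open>auto simp: agr_def\<close>)
          also have "\<dots> = induced n k D t \<sigma> (YV j)" using j by (simp add: induced_YV)
          also have "\<dots> = eval (induced n k D t \<sigma>) (g (FVar (YV j)))"
            using vy j_lt_i[OF j] True nij by blast
          also have "\<dots> = eval (induced n k D t \<rho>) (g (FVar (YV j)))"
            using eval_gy[OF a j True] by simp
          finally show ?thesis using L R by simp
        next
          case False
          have c: "g (FVar (YV j)) = FVar (YV j)" "\<forall>x\<in>D j - D i. g (FVar (XV x)) = FVar (XV x)"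
            using c3 j nij False gyi_ne by blast+
          have "Fj j (gasg g (Xs n) \<rho>) = t j (proj D j (gasg g (Xs n) \<rho>))" using nij by (simp add: Fj_def)
          also have "\<dots> = t j (proj D j \<rho>)"
          proof (rule arg_cong[where f="t j"], rule proj_cong[of D j, OF Dfin[OF j]])
            fix x assume x: "x \<in> D j"
            have xn: "x \<in> {1..n}" using Dsub[OF j] x by blast
            show "gasg g (Xs n) \<rho> (XV x) = \<rho> (XV x)"
            proof (cases "x \<in> D i")
              case True then show ?thesis using ag a by (simp add: agr_def)
            next
              case False then show ?thesis using c(2) x xn by (simp add: gasg_def)
            qed
          qed
          also have "\<dots> = eval (induced n k D t \<rho>) (g (FVar (YV j)))"
            using c(1) j by (simp add: induced_YV)
          finally show ?thesis using L R by simp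
        qed
      qed
    qed
  qed
qed

lemma main_h: assumes r: "\<rho> \<in> Asg (Xs n)" and a: "agr \<rho>"
  shows "induced n k D t (gasg h (Xs n) \<rho>) = gasg h (Xs n \<union> Ys k) (induced n k D t2 \<rho>)"
proof -
  let ?r0 = "gasg h (Xs n) \<rho>"
  have "induced n k D t2 (gasg g (Xs n) ?r0) = gasg g (Xs n \<union> Ys k) (induced n k D t ?r0)"
    using main_g[OF gasg_Asg agr_h[OF a]] .
  then have e: "induced n k D t2 \<rho> = gasg g (Xs n \<union> Ys k) (induced n k D t ?r0)"
    using gh_X[OF r] by simp
  have "gasg h (Xs n \<union> Ys k) (gasg g (Xs n \<union> Ys k) (induced n k D t ?r0)) = induced n k D t ?r0"
    using comp[OF hG gG induced_Asg] gh gasg_id[OF induced_Asg] by simp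
  then show ?thesis using e by simp
qed

lemma outside: assumes r: "\<rho> \<in> Asg (Xs n)" and a: "\<not> agr \<rho>"
  shows "induced n k D t2 \<rho> = induced n k D t \<rho>"
proof
  fix v show "induced n k D t2 \<rho> v = induced n k D t \<rho> v"
  proof (cases v)
    case (XV x) then show ?thesis by (simp add: induced_XV)
  next
    case (YV j)
    show ?thesis
    proof (cases "j \<in> {1..k}")
      case True then show ?thesis using YV ind_t2[OF r True] a by (simp add: Fj_def induced_YV)
    next
      case False then show ?thesis using YV by (auto simp add: induced_YV)
    qed
  qed
qed

lemma RR1: "RR t t2"
  unfolding RR_def
proof
  fix \<rho> :: "var \<Rightarrow> bool" assume r: "\<rho> \<in> Asg (Xs n)"
  show "\<exists>g\<in>Gsyn. induced n k D t2 (gasg g (Xs n) \<rho>) = gasg g (Xs n \<union> Ys k) (induced n k D t \<rho>)"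
  proof (cases "agr \<rho>")
    case True then show ?thesis using main_g[OF r] gG by blast
  next
    case False then show ?thesis using outside[OF r False] id_in gasg_id[OF r] gasg_id[OF induced_Asg]
      by (intro bexI[of _ id]) auto
  qed
qed

lemma RR2: "RR t2 t"
  unfolding RR_def
proof
  fix \<rho> :: "var \<Rightarrow> bool" assume r: "\<rho> \<in> Asg (Xs n)"
  show "\<exists>g\<in>Gsyn. induced n k D t (gasg g (Xs n) \<rho>) = gasg g (Xs n \<union> Ys k) (induced n k D t2 \<rho>)"
  proof (cases "agr \<rho>")
    case True then show ?thesis using main_h[OF r] hG by blast
  next
    case False then show ?thesis using outside[OF r False] id_in gasg_id[OF r] gasg_id[OF induced_Asg]
      by (intro bexI[of _ id]) auto
  qed
qed

lemma t_len: "j \<in> {1..k} \<Longrightarrow> length l \<noteq> card (D j) \<Longrightarrow> t j l = False"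
  using tI unfolding Interp_def by blast

lemma t2_asg: assumes j: "j \<in> {1..k}" and l: "length l = card (D j)"
  shows "t2 j l = Fj j (asg_of D j l)" "asg_of D j l \<in> Asg (Xs n)" "proj D j (asg_of D j l) = l"
  using j l asg_of_Asg[of D j n, OF Dsub[OF j] l] proj_asg[of D j, OF Dfin[OF j] l]
  by (auto simp: t2_def lift_def)

lemma same_below: assumes j: "j \<in> {1..<i}" shows "t2 j = t j"
proof
  fix l
  have jk: "j \<in> {1..k}" using j iK by auto
  show "t2 j l = t j l"
  proof (cases "length l = card (D j)")
    case False then show ?thesis using t_len[OF jk False] jk by (simp add: t2_def lift_def)
  next
    case True
    let ?r = "asg_of D j l"
    note e = t2_asg[OF jk True]
    show ?thesis
    proof (cases "D i \<subseteq> D j \<and> agr ?r")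
      case c: True
      have "\<not> D i \<subset> D j"
      proof
        assume "D i \<subset> D j"
        then have "i < j" using tops iK jk unfolding topsorted_def by blast
        then show False using j by simp
      qed
      then have Dij: "D j = D i" using c by blast
      have "Fj j ?r = eval (induced n k D t (gasg h (Xs n) ?r)) (g (FVar (YV j)))" using c by (simp add: Fj_def)
      also have "\<dots> = eval (induced n k D t \<sigma>) (g (FVar (YV j)))"
        using eval_gy[OF agr_h jk] c Dij by simp
      also have "\<dots> = induced n k D t \<sigma> (YV j)" using vy j by simp
      also have "\<dots> = t j (proj D j \<sigma>)" using jk by (simp add: induced_YV)
      also have "\<dots> = t j (proj D j ?r)"
        by (rule arg_cong[where f="t j"], rule proj_cong[of D j, OF Dfin[OF jk]]) (use c Dij in \<open>auto simp: agr_def\<close>)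
      finally show ?thesis using e by simp
    next
      case False
      then show ?thesis using e by (auto simp add: Fj_def)
    qed
  qed
qed

lemma fin_lists: "finite {l :: bool list. length l = m \<and> P l}"
proof -
  have "finite {xs :: bool list. set xs \<subseteq> UNIV \<and> length xs = m}" by (rule finite_lists_length_eq) simp
  then show ?thesis by (rule rev_finite_subset) auto
qed

lemma less_at_i: "card {l. length l = card (D i) \<and> t2 i l} < card {l. length l = card (D i) \<and> t i l}"
proof (rule psubset_card_mono[OF fin_lists])
  have sub: "t i l" if "length l = card (D i)" "t2 i l" for l
  proof -
    let ?r = "asg_of D i l"
    note e = t2_asg[OF iK that(1)]
    show ?thesis
    proof (cases "agr ?r")
      case True
      have "Fj i ?r = eval (induced n k D t (gasg h (Xs n) ?r)) (g (FVar (YV i)))" using True by (simp add: Fj_def)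
      also have "\<dots> = eval (induced n k D t \<sigma>) (g (FVar (YV i)))"
        using eval_gy[OF agr_h[OF True] iK] by simp
      finally show ?thesis using e that vgi by simp
    next
      case False then show ?thesis using e that by (simp add: Fj_def)
    qed
  qed
  let ?l0 = "proj D i \<sigma>"
  have l0: "length ?l0 = card (D i)" using Dfin[OF iK] by (simp add: proj_def)
  have "t i ?l0" using vi iK by (simp add: induced_YV)
  moreover have "\<not> t2 i ?l0"
  proof -
    have "t2 i ?l0 = Fj i \<sigma>" using ind_t2[OF sA iK] iK by (simp add: induced_YV)
    also have "\<dots> = eval (induced n k D t (gasg h (Xs n) \<sigma>)) (g (FVar (YV i)))" using agr_sig by (simp add: Fj_def)
    also have "\<dots> = eval (induced n k D t \<sigma>) (g (FVar (YV i)))"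
      using eval_gy[OF agr_h[OF agr_sig] iK] by simp
    finally show ?thesis using vgi by simp
  qed
  ultimately show "{l. length l = card (D i) \<and> t2 i l} \<subset> {l. length l = card (D i) \<and> t i l}"
    using sub l0 by blast
qed

lemma K_less: "(K t2, K t) \<in> lex less_than"
proof -
  have i1: "1 \<le> i" "i < Suc k" using iK by auto
  have u: "[1..<Suc k] = [1..<i] @ i # [Suc i..<Suc k]"
    using upt_add_eq_append[OF i1(1), of "Suc k - i"] upt_conv_Cons[OF i1(2)] i1 by simp
  have m: "map (\<lambda>j. card {l. length l = card (D j) \<and> t2 j l}) [1..<i] = map (\<lambda>j. card {l. length l = card (D j) \<and> t j l}) [1..<i]"
    using same_below by (intro map_cong) auto
  show ?thesis unfolding K_def u map_append m
    by (rule lex_append_leftI) (use less_at_i in simp)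
qed

lemma exists_smaller: "\<exists>t'\<in>Interp k D. RR t t' \<and> RR t' t \<and> (K t', K t) \<in> lex less_than"
  using t2I RR1 RR2 K_less by blast

end



theorem theorem2:
  fixes n k :: nat and D :: "nat \<Rightarrow> nat set"
    and Gsyn G :: "(form \<Rightarrow> form) set"
  assumes "prefix n k D"
    and "topsorted k D"
    and "admissible_group n k D Gsyn"
    and "finite G" and "G \<subseteq> Gsyn"
    and c1: "\<forall>g\<in>G. \<forall>i\<in>{1..k}. \<forall>x\<in>D i. g (FVar (XV x)) \<in> BF (Dv D i)"
    and c2: "\<forall>g\<in>G. \<forall>i\<in>{1..k}. g (FVar (YV i)) \<in> BF (YV ` {j\<in>{1..k}. D j = D i})"
    and c3: "\<forall>g\<in>G. \<forall>i\<in>{1..k}. \<forall>j\<in>{1..k}.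
               \<not> (D i \<subseteq> D j) \<and> \<not> (D j \<subseteq> D i) \<and> g (FVar (YV i)) \<noteq> FVar (YV i) \<longrightarrow>
                 g (FVar (YV j)) = FVar (YV j) \<and> (\<forall>x\<in>D j - D i. g (FVar (XV x)) = FVar (XV x))"
  shows "conj_symmetry_breaker n k D (assoc_group n k D Gsyn) (sb_formula k D G)"
proof -
  interpret setting n k D Gsyn using assms(1-3) by unfold_locales
  have finS: "finite {sb_clause D g i | g i. g \<in> G \<and> i \<in> {1..k}}"
    by (rule finite_image_set2) (use assms(4) in auto)
  show ?thesis unfolding conj_symmetry_breaker_def
  proof
    fix s assume sI: "s \<in> Interp k D"
    define Orb where "Orb = {u \<in> Interp k D. RR s u \<and> RR u s}"
    have sO: "s \<in> Orb" using sI RR_refl by (simp add: Orb_def)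
    have wfr: "wf (inv_image (lex less_than) K)" by (intro wf_inv_image wf_lex wf_less_than)
    obtain t where tO: "t \<in> Orb" and tmin: "\<And>y. (y, t) \<in> inv_image (lex less_than) K \<Longrightarrow> y \<notin> Orb"
      using wfE_min[OF wfr sO] by blast
    have tI: "t \<in> Interp k D" and st: "RR s t" "RR t s" using tO by (auto simp: Orb_def)
    have psi: "dqbf_val n k D (sb_formula k D G) t"
    proof (rule ccontr)
      assume "\<not> ?thesis"
      then obtain \<sigma> where sA: "\<sigma> \<in> Asg (Xs n)" and ne: "\<not> eval (induced n k D t \<sigma>) (sb_formula k D G)"
        unfolding dqbf_val_def by blast
      then obtain g i where gG: "g \<in> G" and iK: "i \<in> {1..k}" and nc: "\<not> eval (induced n k D t \<sigma>) (sb_clause D g i)"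
        unfolding sb_formula_def eval_Conj[OF finS] by blast
      have f1: "finite {FIff (FVar (XV x)) (g (FVar (XV x))) | x. x \<in> D i}"
        using Dfin[OF iK] by (simp add: Setcompr_eq_image)
      have f2: "finite {FIff (FVar (YV j)) (g (FVar (YV j))) | j. j \<in> {1..<i}}"
        by (simp add: Setcompr_eq_image)
      from nc have vx: "\<forall>x\<in>D i. induced n k D t \<sigma> (XV x) = eval (induced n k D t \<sigma>) (g (FVar (XV x)))"
        and vy: "\<forall>j\<in>{1..<i}. induced n k D t \<sigma> (YV j) = eval (induced n k D t \<sigma>) (g (FVar (YV j)))"
        and vi: "induced n k D t \<sigma> (YV i)" and vgi: "\<not> eval (induced n k D t \<sigma>) (g (FVar (YV i)))"
      proof -
        have e: "eval (induced n k D t \<sigma>) (Conj {FIff (FVar (XV x)) (g (FVar (XV x))) | x. x \<in> D i})"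
          "eval (induced n k D t \<sigma>) (Conj {FIff (FVar (YV j)) (g (FVar (YV j))) | j. j \<in> {1..<i}})"
          "induced n k D t \<sigma> (YV i)" "\<not> eval (induced n k D t \<sigma>) (g (FVar (YV i)))"
          using nc unfolding sb_clause_def by simp_all
        show "\<forall>x\<in>D i. induced n k D t \<sigma> (XV x) = eval (induced n k D t \<sigma>) (g (FVar (XV x)))"
          using e(1) unfolding eval_Conj[OF f1] by auto
        show "\<forall>j\<in>{1..<i}. induced n k D t \<sigma> (YV j) = eval (induced n k D t \<sigma>) (g (FVar (YV j)))"
        proof
          fix j assume j: "j \<in> {1..<i}"
          have "FIff (FVar (YV j)) (g (FVar (YV j))) \<in> {FIff (FVar (YV j)) (g (FVar (YV j))) | j. j \<in> {1..<i}}"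
            using j by blast
          then have "eval (induced n k D t \<sigma>) (FIff (FVar (YV j)) (g (FVar (YV j))))"
            using e(2) unfolding eval_Conj[OF f2] by blast
          then show "induced n k D t \<sigma> (YV j) = eval (induced n k D t \<sigma>) (g (FVar (YV j)))" by simp
        qed
        show "induced n k D t \<sigma> (YV i)" by (rule e(3))
        show "\<not> eval (induced n k D t \<sigma>) (g (FVar (YV i)))" by (rule e(4))
      qed
      have gS: "g \<in> Gsyn" using gG assms(5) by blast
      obtain h where hG: "h \<in> Gsyn" "g \<circ> h = id" "h \<circ> g = id" using inv_ex[OF gS] by blast
      have c1': "\<forall>x\<in>D i. g (FVar (XV x)) \<in> BF (Dv D i)" using c1 gG iK by blast
      have c2': "\<forall>j\<in>{1..k}. g (FVar (YV j)) \<in> BF (YV ` {l\<in>{1..k}. D l = D j})" using c2 gG by blast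
      have c3': "\<forall>j\<in>{1..k}. \<not> (D i \<subseteq> D j) \<and> \<not> (D j \<subseteq> D i) \<and> g (FVar (YV i)) \<noteq> FVar (YV i) \<longrightarrow>
                 g (FVar (YV j)) = FVar (YV j) \<and> (\<forall>x\<in>D j - D i. g (FVar (XV x)) = FVar (XV x))"
        using c3 gG iK by blast
      have "violation n k D Gsyn t \<sigma> g h i"
        unfolding violation_def violation_axioms_def
        using assms(1-3) tI sA gS hG iK c1' c2' c3' vx vy vi vgi by (simp add: setting_def)
      then obtain t' where t': "t' \<in> Interp k D" "RR t t'" "RR t' t" "(K t', K t) \<in> lex less_than"
        using violation.exists_smaller by blast
      have "t' \<in> Orb" using t'(1) RR_trans[OF st(1) t'(2)] RR_trans[OF t'(3) st(2)] by (simp add: Orb_def)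
      then show False using tmin t'(4) by simp
    qed
    define f where "f = (\<lambda>u. if u = s then t else if u = t then s else u)"
    have ff: "f (f u) = u" for u by (simp add: f_def)
    have fI: "u \<in> Interp k D \<Longrightarrow> f u \<in> Interp k D" for u using sI tI by (simp add: f_def)
    have bij: "bij_betw f (Interp k D) (Interp k D)"
      by (rule bij_betw_byWitness[where f'=f]) (use ff fI in auto)
    have outs: "\<forall>u. u \<notin> Interp k D \<longrightarrow> f u = u" using sI tI by (simp add: f_def)
    have cond: "\<forall>u\<in>Interp k D. \<forall>\<sigma>\<in>Asg (Xs n). \<exists>g\<in>Gsyn.
          induced n k D (f u) (gasg g (Xs n) \<sigma>) = gasg g (Xs n \<union> Ys k) (induced n k D u \<sigma>)"
    proof (intro ballI)
      fix u \<sigma> assume "u \<in> Interp k D" "\<sigma> \<in> Asg (Xs n)"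
      have "RR u (f u)" using st RR_refl by (simp add: f_def)
      then show "\<exists>g\<in>Gsyn. induced n k D (f u) (gasg g (Xs n) \<sigma>) = gasg g (Xs n \<union> Ys k) (induced n k D u \<sigma>)"
        using \<open>\<sigma> \<in> Asg (Xs n)\<close> unfolding RR_def by blast
    qed
    have "f \<in> assoc_group n k D Gsyn" unfolding assoc_group_def using bij outs cond by blast
    moreover have "f s = t" by (simp add: f_def)
    ultimately show "\<exists>f\<in>assoc_group n k D Gsyn. dqbf_val n k D (sb_formula k D G) (f s)" using psi by metis
  qed
qed

end
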